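(* Let $\beta$ be a real root of an irreducible quadratic polynomial with integer coefficients, and let $\beta'$ denote its other root (conjugate). Then $p_\beta(\alpha) < \infty$ for every $\alpha \in \mathbb{R}$ if and only if at least one of $\beta$ and $\beta'$ is greater than $1$.
   Context: For $\beta, \alpha \in \mathbb{C}$, the partition function $p_\beta(\alpha) \in \mathbb{Z}_{\geq 0} \cup \{\infty\}$ is the number of polynomials $f(x) \in \mathbb{Z}_{\geq 0}[x]$ (polynomials with non-negative integer coefficients) such that $f(\beta) = \alpha$, i.e. the number of ways to write $\alpha = a_j\beta^j + \dots + a_1\beta + a_0$ with non-negative integers $a_i$; it may be infinite. *)

theory Defs
  imports "HOL-Computational_Algebra.Polynomial" "HOL-Library.Extended_Nat" Complex_Main
begin

text \<open>Polynomials with non-negative integer coefficients are modelled as nat poly;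
  f(beta) is the evaluation of its image in complex poly.\<close>

definition partition_polys :: "complex \<Rightarrow> complex \<Rightarrow> nat poly set" where
  "partition_polys \<beta> \<alpha> = {f :: nat poly. poly (map_poly of_nat f) \<beta> = \<alpha>}"

definition partition_fn :: "complex \<Rightarrow> complex \<Rightarrow> enat" where
  "partition_fn \<beta> \<alpha> =
     (if finite (partition_polys \<beta> \<alpha>) then enat (card (partition_polys \<beta> \<alpha>)) else \<infinity>)"

end

theory Submission
  imports Defs
begin

lemma ev_altdef: "poly (map_poly (of_nat :: nat \<Rightarrow> 'a::{field_char_0}) f) x = (\<Sum>i\<le>degree f. of_nat (coeff f i) * x ^ i)"
  by (simp add: poly_altdef degree_map_poly coeff_map_poly)
lemma ev_complex: "poly (map_poly of_nat f) (complex_of_real x) = complex_of_real (poly (map_poly of_nat f) x)"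
  by (simp add: ev_altdef)
lemma map_int_mult: "map_poly (of_int :: int \<Rightarrow> 'a::comm_ring_1) (p*q) = map_poly of_int p * map_poly of_int q"
  by (rule poly_eqI) (simp add: coeff_map_poly coeff_mult)
lemma map_int_add: "map_poly (of_int :: int \<Rightarrow> 'a::comm_ring_1) (p+q) = map_poly of_int p + map_poly of_int q"
  by (rule poly_eqI) (simp add: coeff_map_poly)
lemma map_int_diff: "map_poly (of_int :: int \<Rightarrow> 'a::comm_ring_1) (p-q) = map_poly of_int p - map_poly of_int q"
  by (rule poly_eqI) (simp add: coeff_map_poly)
lemma map_int_smult: "map_poly (of_int :: int \<Rightarrow> 'a::comm_ring_1) (smult a q) = smult (of_int a) (map_poly of_int q)"
  by (rule poly_eqI) (simp add: coeff_map_poly)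
lemma map_nat_add: "map_poly (of_nat :: nat \<Rightarrow> 'a::comm_semiring_1) (p+q) = map_poly of_nat p + map_poly of_nat q"
  by (rule poly_eqI) (simp add: coeff_map_poly)
lemma map_nat_sum: "map_poly (of_nat :: nat \<Rightarrow> 'a::comm_semiring_1) (sum g A) = (\<Sum>i\<in>A. map_poly of_nat (g i))"
  by (induction A rule: infinite_finite_induct) (auto simp: map_nat_add)
lemma nat_to_int: "map_poly (of_int :: int \<Rightarrow> 'a::comm_ring_1) (map_poly int f) = map_poly of_nat f"
  by (simp add: map_poly_map_poly o_def)

lemma quad_form:
  fixes p :: "int poly" and x :: real
  assumes "degree p = 2"
  shows "poly (map_poly of_int p) x = of_int (coeff p 0) + of_int (coeff p 1) * x + of_int (coeff p 2) * x^2"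
  using assms by (simp add: poly_altdef degree_map_poly coeff_map_poly eval_nat_numeral)

lemma quad_eq:
  fixes p :: "int poly"
  assumes "degree p = 2"
  shows "p = [:coeff p 0, coeff p 1, coeff p 2:]"
proof (rule poly_eqI)
  fix n show "coeff p n = coeff [:coeff p 0, coeff p 1, coeff p 2:] n"
    using assms by (cases n; cases "n - 1"; cases "n - 2") (auto simp: coeff_pCons coeff_eq_0 numeral_2_eq_2 split: nat.split)
qed

lemma not_unit_lin: "y \<noteq> 0 \<Longrightarrow> \<not> is_unit [:x, y::int:]"
  by (auto simp: is_unit_poly_iff)

lemma root_irrational:
  fixes p :: "int poly" and x :: real
  assumes deg: "degree p = 2" and irr: "irreducible p" and root: "poly (map_poly of_int p) x = 0"
  shows "x \<notin> \<rat>"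
proof
  assume "x \<in> \<rat>"
  then obtain u v :: int where v: "v > 0" and cop: "coprime u v" and xe: "x = of_int u / of_int v"
    by (rule Rats_cases')
  define a where "a = coeff p 2"
  define b where "b = coeff p 1"
  define c where "c = coeff p 0"
  have "p \<noteq> 0" using deg by auto
  hence a0: "a \<noteq> 0" using deg unfolding a_def by (metis leading_coeff_0_iff)
  have pe: "p = [:c, b, a:]" using quad_eq[OF deg] by (simp add: a_def b_def c_def)
  have "real_of_int c + of_int b * x + of_int a * x^2 = 0" using root quad_form[OF deg, of x] by (simp add: a_def b_def c_def)
  hence "real_of_int (a * u^2 + b * u * v + c * v^2) = 0" using v unfolding xe
    by (simp add: field_simps power2_eq_square)
  hence eq: "a * u^2 + b * u * v + c * v^2 = 0" by (simp only: of_int_eq_0_iff)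
  have "v dvd a * u^2"
  proof -
    have "a * u^2 = v * (- b * u - c * v)" using eq by (simp add: algebra_simps power2_eq_square)
    thus ?thesis by simp
  qed
  moreover have "coprime v (u^2)" using cop by (simp add: coprime_commute)
  ultimately have "v dvd a" using coprime_dvd_mult_left_iff by blast
  then obtain a' where a': "a = v * a'" by blast
  show False
  proof (cases "u = 0")
    case True
    hence "c = 0" using eq v by (simp add: power2_eq_square)
    hence "p = [:0, 1:] * [:b, a:]" using pe by simp
    hence "is_unit [:0, 1::int:] \<or> is_unit [:b, a:]" using irr irreducibleD by blast
    thus False using not_unit_lin[of 1 0] not_unit_lin[of a b] a0 by auto
  next
    case False
    have "u dvd c * v^2"
    proof -
      have "c * v^2 = u * (- a * u - b * v)" using eq by (simp add: algebra_simps power2_eq_square)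
      thus ?thesis by simp
    qed
    moreover have "coprime u (v^2)" using cop by simp
    ultimately have "u dvd c" using coprime_dvd_mult_left_iff by blast
    then obtain c' where c': "c = u * c'" by blast
    have "u * v * (a' * u + b + c' * v) = 0" using eq a' c' by (simp add: algebra_simps power2_eq_square)
    hence bb: "b = - a' * u - c' * v" using False v by simp
    have "p = [:-u, v:] * [:-c', a':]" using pe a' c' bb by (simp add: algebra_simps)
    hence "is_unit [:-u, v:] \<or> is_unit [:-c', a':]" using irr irreducibleD by blast
    moreover have "a' \<noteq> 0" using a0 a' by auto
    ultimately show False using not_unit_lin[of v "-u"] not_unit_lin[of a' "-c'"] v by auto
  qed
qed

lemma transfer_int:
  fixes p h :: "int poly" and x y :: real
  assumes deg: "degree p = 2" and irr: "irreducible p"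
    and rx: "poly (map_poly of_int p) x = 0" and ry: "poly (map_poly of_int p) y = 0"
    and hx: "poly (map_poly of_int h) x = 0"
  shows "poly (map_poly of_int h) y = 0"
proof -
  have p0: "p \<noteq> 0" using deg by auto
  define r where "r = pseudo_mod h p"
  obtain a q where a0: "a \<noteq> 0" and hq: "smult a h = p * q + r"
    using pseudo_mod(1)[OF p0, of h] unfolding r_def by blast
  have rdeg: "r = 0 \<or> degree r < 2" using pseudo_mod(2)[OF p0, of h] deg unfolding r_def by simp
  have re: "r = [:coeff r 0, coeff r 1:]"
  proof (rule poly_eqI)
    fix n show "coeff r n = coeff [:coeff r 0, coeff r 1:] n"
      using rdeg by (cases n; cases "n - 1") (auto simp: coeff_pCons coeff_eq_0 split: nat.split)
  qed
  have ev: "of_int a * poly (map_poly of_int h) z = poly (map_poly of_int p) z * poly (map_poly of_int q) z + (of_int (coeff r 0) + of_int (coeff r 1) * z)" for z :: real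
  proof -
    have "poly (map_poly of_int (smult a h)) z = poly (map_poly of_int (p * q + r)) z" using hq by simp
    also have "poly (map_poly of_int r) z = of_int (coeff r 0) + of_int (coeff r 1) * z"
      by (subst re) (simp add: map_poly_pCons)
    ultimately show ?thesis by (simp add: map_int_smult map_int_add map_int_mult)
  qed
  have "of_int (coeff r 0) + of_int (coeff r 1) * x = (0::real)" using ev[of x] rx hx by simp
  moreover have "coeff r 1 = 0"
  proof (rule ccontr)
    assume nz: "coeff r 1 \<noteq> 0"
    with calculation have "x = - of_int (coeff r 0) / of_int (coeff r 1)" by (simp add: field_simps)
    hence "x \<in> \<rat>" by simp
    thus False using root_irrational[OF deg irr rx] by simp
  qed
  ultimately have "coeff r 0 = 0" by simp
  with \<open>coeff r 1 = 0\<close> have "of_int a * poly (map_poly of_int h) y = (0::real)" using ev[of y] ry by simp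
  thus ?thesis using a0 by simp
qed

lemma transfer_nat:
  fixes p :: "int poly" and f g :: "nat poly" and x y :: real
  assumes deg: "degree p = 2" and irr: "irreducible p"
    and rx: "poly (map_poly of_int p) x = 0" and ry: "poly (map_poly of_int p) y = 0"
    and fg: "poly (map_poly of_nat f) x = poly (map_poly of_nat g) x"
  shows "poly (map_poly of_nat f) y = poly (map_poly of_nat g) y"
proof -
  define h where "h = map_poly int f - map_poly int g"
  have he: "poly (map_poly of_int h) z = poly (map_poly of_nat f) z - poly (map_poly of_nat g) (z::real)" for z
    unfolding h_def by (simp add: map_int_diff nat_to_int)
  have "poly (map_poly of_int h) x = 0" using he fg by simp
  from transfer_int[OF deg irr rx ry this] show ?thesis using he by simp
qed

lemma coeff_term_le:
  fixes f :: "nat poly" and x :: real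
  assumes "x \<ge> 0"
  shows "real (coeff f i) * x ^ i \<le> poly (map_poly of_nat f) x"
proof (cases "i \<le> degree f")
  case True
  have "real (coeff f i) * x ^ i \<le> (\<Sum>j\<le>degree f. real (coeff f j) * x ^ j)"
    by (rule member_le_sum) (use True assms in auto)
  thus ?thesis by (simp add: ev_altdef)
next
  case False
  hence "coeff f i = 0" by (simp add: coeff_eq_0)
  moreover have "0 \<le> poly (map_poly of_nat f) x" unfolding ev_altdef using assms by (intro sum_nonneg) auto
  ultimately show ?thesis by simp
qed

lemma finite_reps:
  fixes g :: real and c :: real
  assumes g: "g > 1"
  shows "finite {f :: nat poly. poly (map_poly of_nat f) g = c}"
proof -
  obtain N where N: "c < g ^ N" using real_arch_pow[OF g] by blast
  define K where "K = nat \<lfloor>c\<rfloor>"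
  have sub: "{f :: nat poly. poly (map_poly of_nat f) g = c} \<subseteq> Poly ` {xs. set xs \<subseteq> {0..K} \<and> length xs = N}"
  proof
    fix f :: "nat poly" assume "f \<in> {f. poly (map_poly of_nat f) g = c}"
    hence fc: "poly (map_poly of_nat f) g = c" by simp
    have le: "real (coeff f i) * g ^ i \<le> c" for i using coeff_term_le[of g f i] g fc by simp
    have z: "coeff f i = 0" if "i \<ge> N" for i
    proof (rule ccontr)
      assume "coeff f i \<noteq> 0"
      hence "1 \<le> real (coeff f i)" by simp
      moreover have "g ^ N \<le> g ^ i" using that g by (simp add: power_increasing)
      moreover have "0 \<le> g ^ N" using g by simp
      ultimately have "g ^ N \<le> real (coeff f i) * g ^ i" by (metis mult_le_cancel_right1 order_trans mult_left_mono mult.commute mult_1 dual_order.trans power_increasing)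
      thus False using le[of i] N by simp
    qed
    have b: "coeff f i \<le> K" for i
    proof -
      have "1 \<le> g ^ i" using g by simp
      hence "real (coeff f i) \<le> real (coeff f i) * g ^ i" by (simp add: mult_le_cancel_left1)
      hence "real (coeff f i) \<le> c" using le[of i] by simp
      thus ?thesis unfolding K_def by linarith
    qed
    have "f = Poly (map (coeff f) [0..<N])"
      by (rule poly_eqI) (auto simp: nth_default_def z)
    moreover have "map (coeff f) [0..<N] \<in> {xs. set xs \<subseteq> {0..K} \<and> length xs = N}" using b by auto
    ultimately show "f \<in> Poly ` {xs. set xs \<subseteq> {0..K} \<and> length xs = N}" by blast
  qed
  show ?thesis by (rule finite_subset[OF sub]) (intro finite_imageI finite_lists_length_eq; simp)
qed

lemma real_nat_int: "real (nat z) = (if z \<ge> 0 then of_int z else 0)"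
  by simp

lemma family:
  fixes A B C :: int and m :: nat and x :: real
  assumes A: "A > 0" and AB: "A + B \<ge> 0" and ABC: "A + B + C \<ge> 0" and m: "m \<ge> 1"
    and eq: "of_int A * (x^m)^2 + of_int B * x^m + of_int C = 0"
  shows "\<exists>\<alpha>. infinite {f :: nat poly. poly (map_poly of_nat f) x = \<alpha>}"
proof -
  define \<rho> where "\<rho> = x ^ m"
  define k0 where "k0 = nat C"
  define k1 where "k1 = nat (B + C)"
  define k2 where "k2 = nat (A + B + C)"
  define k3 where "k3 = nat (A + B)"
  define k4 where "k4 = nat A"
  define E0 where "E0 = nat (- C)"
  define E1 where "E1 = nat (- (B + C))"
  define F where "F n = monom k0 (m*0) + monom k1 (m*1) + (\<Sum>k\<in>{2..Suc n}. monom k2 (m*k)) + monom k3 (m*(n+2)) + monom k4 (m*(n+3))" for n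
  have Q: "of_int C + of_int B * \<rho> + of_int A * \<rho>^2 = 0" using eq unfolding \<rho>_def by (simp add: algebra_simps)
  have val: "poly (map_poly of_nat (F n)) x = real k0 + real k1 * \<rho> + real k2 * (\<Sum>k\<in>{2..Suc n}. \<rho>^k) + real k3 * \<rho>^(n+2) + real k4 * \<rho>^(n+3)" for n
  proof -
    have pm: "poly (map_poly of_nat (monom c (m*k))) x = real c * \<rho>^k" for c k
      by (simp add: map_poly_monom poly_monom \<rho>_def power_mult)
    show ?thesis unfolding F_def map_nat_add map_nat_sum poly_add poly_sum pm by (simp only: sum_distrib_left[symmetric] power_0 power_one_right mult_1_right)
  qed
  have iden: "of_int C + of_int (B+C) * \<rho> + of_int (A+B+C) * (\<Sum>k\<in>{2..Suc n}. \<rho>^k) + of_int (A+B) * \<rho>^(n+2) + of_int A * \<rho>^(n+3) = 0" for n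
  proof (induction n)
    case 0
    have "of_int C + of_int (B+C) * \<rho> + of_int (A+B) * \<rho>^2 + of_int A * \<rho>^3 = (1 + \<rho>) * (of_int C + of_int B * \<rho> + of_int A * \<rho>^2)"
      by (simp add: algebra_simps power2_eq_square power3_eq_cube)
    thus ?case using Q by (simp add: power2_eq_square)
  next
    case (Suc n)
    have s: "(\<Sum>k\<in>{2..Suc (Suc n)}. \<rho>^k) = (\<Sum>k\<in>{2..Suc n}. \<rho>^k) + \<rho>^(n+2)"
      by (simp add: sum.cl_ivl_Suc)
    have "of_int C + of_int (B+C) * \<rho> + of_int (A+B+C) * (\<Sum>k\<in>{2..Suc (Suc n)}. \<rho>^k) + of_int (A+B) * \<rho>^(Suc n+2) + of_int A * \<rho>^(Suc n+3)
      = (of_int C + of_int (B+C) * \<rho> + of_int (A+B+C) * (\<Sum>k\<in>{2..Suc n}. \<rho>^k) + of_int (A+B) * \<rho>^(n+2) + of_int A * \<rho>^(n+3))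
        + \<rho>^(n+2) * (of_int C + of_int B * \<rho> + of_int A * \<rho>^2)"
      unfolding s by (simp add: algebra_simps power2_eq_square power_add eval_nat_numeral)
    thus ?case using Suc.IH Q by simp
  qed
  define \<alpha> where "\<alpha> = real E0 + real E1 * \<rho>"
  have valF: "poly (map_poly of_nat (F n)) x = \<alpha>" for n
  proof -
    have "real k0 = of_int C + real E0" "real k1 = of_int (B+C) + real E1"
      "real k2 = of_int (A+B+C)" "real k3 = of_int (A+B)" "real k4 = of_int A"
      unfolding k0_def k1_def k2_def k3_def k4_def E0_def E1_def using A AB ABC by (simp_all add: real_nat_int)
    thus ?thesis using val[of n] iden[of n] unfolding \<alpha>_def by (simp add: algebra_simps)
  qed
  have m0: "m > 0" using m by simp
  have cm: "coeff (monom c (m*k)) (m*j) = (if k = j then c else 0)" for c k j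
    using m0 by (simp add: coeff_monom)
  have c1: "coeff (F n) (m*(n+3)) = k4" for n
    unfolding F_def coeff_add coeff_sum cm by simp
  have c2: "coeff (F n) (m*(n'+3)) = 0" if "n < n'" for n n'
    unfolding F_def coeff_add coeff_sum cm using that by simp
  have k4: "k4 \<noteq> 0" unfolding k4_def using A by simp
  have "inj F"
  proof (rule injI)
    fix n n' assume e: "F n = F n'"
    show "n = n'"
    proof (rule ccontr)
      assume "n \<noteq> n'"
      then consider "n < n'" | "n' < n" by linarith
      thus False
      proof cases
        case 1 thus False using c1[of n'] c2[OF 1] e k4 by simp
      next
        case 2 thus False using c1[of n] c2[OF 2] e k4 by simp
      qed
    qed
  qed
  hence "infinite (range F)" by (rule range_inj_infinite)
  moreover have "range F \<subseteq> {f. poly (map_poly of_nat f) x = \<alpha>}" using valF by auto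
  ultimately show ?thesis using infinite_super by blast
qed

fun T :: "int \<Rightarrow> int \<Rightarrow> int \<Rightarrow> nat \<Rightarrow> int" where
  "T a b c 0 = 2"
| "T a b c (Suc 0) = - b"
| "T a b c (Suc (Suc n)) = - b * T a b c (Suc n) - a * c * T a b c n"

lemma T_val:
  fixes x y :: real
  assumes vb: "of_int b = - of_int a * (x + y)" and vc: "of_int c = of_int a * x * y"
  shows "of_int (T a b c n) = of_int a ^ n * (x^n + y^n)"
proof -
  have "of_int (T a b c n) = of_int a ^ n * (x^n + y^n) \<and> of_int (T a b c (Suc n)) = of_int a ^ Suc n * (x^Suc n + y^Suc n)"
  proof (induction n)
    case 0 thus ?case using vb by simp
  next
    case (Suc n)
    hence i1: "of_int (T a b c n) = of_int a ^ n * (x^n + y^n)"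
      and i2: "of_int (T a b c (Suc n)) = of_int a ^ Suc n * (x^Suc n + y^Suc n)" by auto
    have "of_int (T a b c (Suc (Suc n))) = - of_int b * of_int (T a b c (Suc n)) - of_int a * of_int c * of_int (T a b c n)"
      by simp
    also have "\<dots> = of_int a ^ Suc (Suc n) * (x^Suc (Suc n) + y^Suc (Suc n))"
      unfolding i1 i2 vb vc by (simp add: algebra_simps)
    finally show ?case using i2 by simp
  qed
  thus ?thesis by simp
qed

lemma choose_m:
  fixes a b c :: int and x y :: real
  assumes a: "a > 0" and rx: "of_int a * x^2 + of_int b * x + of_int c = 0"
    and ry: "of_int a * y^2 + of_int b * y + of_int c = 0"
    and xy: "x \<noteq> y" and x1: "x < 1" and y1: "y < 1"
  shows "\<exists>A B C m. A > 0 \<and> A + B \<ge> 0 \<and> A + B + C \<ge> 0 \<and> m \<ge> 1 \<and>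
           of_int A * (x^m)^2 + of_int B * x^m + of_int C = (0::real)"
proof -
  have "(x - y) * (of_int a * (x + y) + of_int b) = 0"
    using rx ry by (simp add: algebra_simps power2_eq_square)
  hence vb: "of_int b = - of_int a * (x + y)" using xy by simp
  have vc: "of_int c = of_int a * x * y" using rx vb by (simp add: algebra_simps power2_eq_square)
  show ?thesis
  proof (cases "x + y \<le> 1")
    case True
    have "real_of_int (a + b) = of_int a * (1 - (x + y))" using vb by (simp add: algebra_simps)
    also have "\<dots> \<ge> 0" using True a by simp
    finally have 1: "a + b \<ge> 0" by linarith
    have "real_of_int (a + b + c) = of_int a * ((1 - x) * (1 - y))" using vb vc by (simp add: algebra_simps)
    also have "\<dots> \<ge> 0" using a x1 y1 by simp
    finally have 2: "a + b + c \<ge> 0" by linarith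
    show ?thesis using a 1 2 rx by (intro exI[of _ a] exI[of _ b] exI[of _ c] exI[of _ 1]) simp
  next
    case False
    hence x0: "x > 0" and y0: "y > 0" using x1 y1 by linarith+
    obtain n1 where n1: "x ^ n1 < 1/2" using real_arch_pow_inv[of "1/2" x] x1 by auto
    obtain n2 where n2: "y ^ n2 < 1/2" using real_arch_pow_inv[of "1/2" y] y1 by auto
    define m where "m = max n1 n2"
    have "n1 \<noteq> 0" using n1 by (cases n1) auto
    hence m1: "m \<ge> 1" unfolding m_def by simp
    have "x ^ m \<le> x ^ n1" by (rule power_decreasing) (use x0 x1 in \<open>auto simp: m_def\<close>)
    hence xm: "x ^ m \<le> 1/2" using n1 by linarith
    have "y ^ m \<le> y ^ n2" by (rule power_decreasing) (use y0 y1 in \<open>auto simp: m_def\<close>)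
    hence ym: "y ^ m \<le> 1/2" using n2 by linarith
    have xm0: "x ^ m \<ge> 0" "y ^ m \<ge> 0" using x0 y0 by simp_all
    define A where "A = a ^ m"
    define B where "B = - T a b c m"
    define C where "C = c ^ m"
    have rA: "real_of_int A = of_int a ^ m" unfolding A_def by simp
    have rB: "real_of_int B = - (of_int a ^ m * (x^m + y^m))" unfolding B_def using T_val[OF vb vc] by simp
    have rC: "real_of_int C = of_int a ^ m * (x^m * y^m)" unfolding C_def using vc by (simp add: power_mult_distrib)
    have am: "(of_int a :: real) ^ m > 0" using a by simp
    have "real_of_int (A + B) = of_int a ^ m * (1 - x^m - y^m)" using rA rB by (simp add: algebra_simps)
    also have "\<dots> \<ge> 0" using am xm ym by simp
    finally have 1: "A + B \<ge> 0" by linarith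
    have "real_of_int (A + B + C) = of_int a ^ m * ((1 - x^m) * (1 - y^m))" using rA rB rC by (simp add: algebra_simps)
    also have "\<dots> \<ge> 0" using am xm ym by simp
    finally have 2: "A + B + C \<ge> 0" by linarith
    have 3: "of_int A * (x^m)^2 + of_int B * x^m + of_int C = (0::real)"
      unfolding rA rB rC by (simp add: algebra_simps power2_eq_square)
    have "A > 0" unfolding A_def using a by simp
    thus ?thesis using 1 2 3 m1 by blast
  qed
qed

theorem theorem1:
  fixes p :: "int poly" and \<beta> \<beta>' :: real
  assumes "degree p = 2" and "irreducible p"
    and "poly (map_poly of_int p) \<beta> = 0"
    and "poly (map_poly of_int p) \<beta>' = 0" and "\<beta>' \<noteq> \<beta>"
  shows "(\<forall>\<alpha>::real. partition_fn (of_real \<beta>) (of_real \<alpha>) < \<infinity>) \<longleftrightarrow> (\<beta> > 1 \<or> \<beta>' > 1)"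
proof -
  note deg = assms(1) and irr = assms(2) and r1 = assms(3) and r2 = assms(4) and ne = assms(5)
  define S where "S \<alpha> = {f :: nat poly. poly (map_poly of_nat f) \<beta> = \<alpha>}" for \<alpha>
  have fn: "partition_fn (of_real \<beta>) (of_real \<alpha>) < \<infinity> \<longleftrightarrow> finite (S \<alpha>)" for \<alpha>
  proof -
    have "partition_polys (of_real \<beta>) (of_real \<alpha>) = S \<alpha>"
      unfolding partition_polys_def S_def ev_complex of_real_eq_iff by simp
    thus ?thesis unfolding partition_fn_def by simp
  qed
  have b1: "\<beta> \<noteq> 1" using root_irrational[OF deg irr r1] by auto
  have b2: "\<beta>' \<noteq> 1" using root_irrational[OF deg irr r2] by auto
  have "(\<forall>\<alpha>. finite (S \<alpha>)) \<longleftrightarrow> (\<beta> > 1 \<or> \<beta>' > 1)"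
  proof
    assume fin: "\<forall>\<alpha>. finite (S \<alpha>)"
    show "\<beta> > 1 \<or> \<beta>' > 1"
    proof (rule ccontr)
      assume "\<not> (\<beta> > 1 \<or> \<beta>' > 1)"
      hence x1: "\<beta> < 1" and y1: "\<beta>' < 1" using b1 b2 by auto
      define a where "a = coeff p 2"
      define b where "b = coeff p 1"
      define c where "c = coeff p 0"
      have "p \<noteq> 0" using deg by auto
      hence a0: "a \<noteq> 0" using deg unfolding a_def by (metis leading_coeff_0_iff)
      have e1: "of_int a * \<beta>^2 + of_int b * \<beta> + of_int c = 0"
        using r1 quad_form[OF deg, of \<beta>] unfolding a_def b_def c_def by (simp add: algebra_simps)
      have e2: "of_int a * \<beta>'^2 + of_int b * \<beta>' + of_int c = 0"
        using r2 quad_form[OF deg, of \<beta>'] unfolding a_def b_def c_def by (simp add: algebra_simps)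
      obtain a' b' c' :: int where a': "a' > 0" and e1': "of_int a' * \<beta>^2 + of_int b' * \<beta> + of_int c' = 0"
        and e2': "of_int a' * \<beta>'^2 + of_int b' * \<beta>' + of_int c' = 0"
      proof (cases "a > 0")
        case True thus ?thesis using that e1 e2 by blast
      next
        case False
        hence "-a > 0" using a0 by simp
        moreover have "of_int (-a) * \<beta>^2 + of_int (-b) * \<beta> + of_int (-c) = 0" using e1 by simp
        moreover have "of_int (-a) * \<beta>'^2 + of_int (-b) * \<beta>' + of_int (-c) = 0" using e2 by simp
        ultimately show ?thesis using that by blast
      qed
      obtain A B C m where "A > 0" "A + B \<ge> 0" "A + B + C \<ge> 0" "m \<ge> 1"
        "of_int A * (\<beta>^m)^2 + of_int B * \<beta>^m + of_int C = (0::real)"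
        using choose_m[OF a' e1' e2' ne[symmetric] x1 y1] by blast
      from family[OF this] obtain \<alpha> where "infinite (S \<alpha>)" unfolding S_def by blast
      thus False using fin by blast
    qed
  next
    assume g: "\<beta> > 1 \<or> \<beta>' > 1"
    show "\<forall>\<alpha>. finite (S \<alpha>)"
    proof
      fix \<alpha>
      show "finite (S \<alpha>)"
      proof (cases "\<beta> > 1")
        case True thus ?thesis unfolding S_def by (rule finite_reps)
      next
        case False
        hence g2: "\<beta>' > 1" using g by simp
        show ?thesis
        proof (cases "S \<alpha> = {}")
          case True thus ?thesis by simp
        next
          case False
          then obtain f0 where f0: "f0 \<in> S \<alpha>" by blast
          have "S \<alpha> \<subseteq> {f. poly (map_poly of_nat f) \<beta>' = poly (map_poly of_nat f0) \<beta>'}"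
          proof
            fix f assume "f \<in> S \<alpha>"
            hence "poly (map_poly of_nat f) \<beta> = poly (map_poly of_nat f0) \<beta>" using f0 unfolding S_def by simp
            from transfer_nat[OF deg irr r1 r2 this]
            show "f \<in> {f. poly (map_poly of_nat f) \<beta>' = poly (map_poly of_nat f0) \<beta>'}" by simp
          qed
          thus ?thesis using finite_reps[OF g2] finite_subset by blast
        qed
      qed
    qed
  qed
  thus ?thesis using fn by simp
qed

end
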